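(* Let $(B,\lfloor\cdot,\cdot\rfloor)$ be an SSD space with quadratic form $q$ and let $P\subset B$ be $q$-positive. Then $P$ is premaximally $q$-positive if and only if either $\Phi_P(b)\ge q(b)$ for all $b\in B$, or $P^{\pi}$ is an affine subset of $B$.
   Context: An SSD space is a pair $(B,\lfloor\cdot,\cdot\rfloor)$ with $B$ a nonzero real vector space and $\lfloor\cdot,\cdot\rfloor$ a symmetric bilinear form; $q(b)=\frac12\lfloor b,b\rfloor$. A nonempty $A\subset B$ is $q$-positive if $q(b-c)\ge0$ for all $b,c\in A$; maximally $q$-positive if $q$-positive and not properly contained in another $q$-positive set. For $A\subset B$, $A^{\pi}:=\{b\in B: q(b-a)\ge0\ \forall a\in A\}$. For nonempty $A\subset B$, $\Phi_A:B\to\mathbb{R}\cup\{+\infty\}$, $\Phi_A(x)=\sup_{a\in A}\{\lfloor x,a\rfloor-q(a)\}$. A $q$-positive set $P$ is premaximally $q$-positive if there is a unique maximally $q$-positive set containing $P$. *)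

theory Defs
  imports "HOL-Analysis.Analysis" "HOL-Library.Extended_Real"
begin

definition ssd_space :: "('a::real_vector \<Rightarrow> 'a \<Rightarrow> real) \<Rightarrow> bool" where
  "ssd_space s \<longleftrightarrow> (\<exists>x::'a. x \<noteq> 0) \<and>
     (\<forall>x y. s x y = s y x) \<and>
     (\<forall>y. linear (\<lambda>x. s x y))"

definition qf :: "('a::real_vector \<Rightarrow> 'a \<Rightarrow> real) \<Rightarrow> 'a \<Rightarrow> real" where
  "qf s b = s b b / 2"

definition q_positive :: "('a::real_vector \<Rightarrow> 'a \<Rightarrow> real) \<Rightarrow> 'a set \<Rightarrow> bool" where
  "q_positive s A \<longleftrightarrow> A \<noteq> {} \<and> (\<forall>b\<in>A. \<forall>c\<in>A. qf s (b - c) \<ge> 0)"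

definition max_q_positive :: "('a::real_vector \<Rightarrow> 'a \<Rightarrow> real) \<Rightarrow> 'a set \<Rightarrow> bool" where
  "max_q_positive s A \<longleftrightarrow> q_positive s A \<and> (\<forall>C. q_positive s C \<and> A \<subseteq> C \<longrightarrow> C = A)"

definition pi_set :: "('a::real_vector \<Rightarrow> 'a \<Rightarrow> real) \<Rightarrow> 'a set \<Rightarrow> 'a set" where
  "pi_set s A = {b. \<forall>a\<in>A. qf s (b - a) \<ge> 0}"

definition Phi :: "('a::real_vector \<Rightarrow> 'a \<Rightarrow> real) \<Rightarrow> 'a set \<Rightarrow> 'a \<Rightarrow> ereal" where
  "Phi s A x = (SUP a\<in>A. ereal (s x a - qf s a))"

definition premax_q_positive :: "('a::real_vector \<Rightarrow> 'a \<Rightarrow> real) \<Rightarrow> 'a set \<Rightarrow> bool" where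
  "premax_q_positive s P \<longleftrightarrow> q_positive s P \<and> (\<exists>!M. max_q_positive s M \<and> P \<subseteq> M)"

end

theory Submission
  imports Defs
begin

context
  fixes s :: "'a::real_vector \<Rightarrow> 'a \<Rightarrow> real"
  assumes ssd: "ssd_space s"
begin

lemma sym: "s x y = s y x" using ssd unfolding ssd_space_def by blast
lemma lin: "linear (\<lambda>x. s x y)" using ssd unfolding ssd_space_def by blast

lemma s_add1: "s (x + y) z = s x z + s y z" using linear_add[OF lin[of z]] by simp
lemma s_scale1: "s (c *\<^sub>R x) z = c * s x z" using linear_scale[OF lin[of z]] by simp
lemma s_diff1: "s (x - y) z = s x z - s y z" using linear_diff[OF lin[of z]] by simp
lemma s_neg1: "s (- x) z = - s x z" using linear_neg[OF lin[of z]] by simp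
lemma s_add2: "s z (x + y) = s z x + s z y" using s_add1 sym by metis
lemma s_scale2: "s z (c *\<^sub>R x) = c * s z x" using s_scale1 sym by metis
lemma s_diff2: "s z (x - y) = s z x - s z y" using s_diff1 sym by metis
lemma s_neg2: "s z (- x) = - s z x" using s_neg1 sym by metis
lemma s_zero1: "s 0 z = 0" using linear_0[OF lin[of z]] by simp

lemmas s_simps = s_add1 s_scale1 s_diff1 s_neg1 s_add2 s_scale2 s_diff2 s_neg2

lemma q_add: "qf s (x + y) = qf s x + s x y + qf s y"
  unfolding qf_def using sym[of y x] by (simp add: s_simps field_simps)
lemma q_scale: "qf s (c *\<^sub>R x) = c^2 * qf s x"
  unfolding qf_def by (simp add: s_simps power2_eq_square)
lemma q_neg: "qf s (- x) = qf s x"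
  unfolding qf_def by (simp add: s_simps)
lemma q_diff: "qf s (x - y) = qf s x - s x y + qf s y"
  using q_add[of x "-y"] q_neg[of y] by (simp add: s_simps)
lemma q_zero: "qf s 0 = 0" unfolding qf_def by (simp add: s_zero1)
lemma q_swap: "qf s (x - y) = qf s (y - x)"
  using q_neg[of "x - y"] by simp
lemma q_line: "qf s (u + t *\<^sub>R v) = qf s u + t * s u v + t^2 * qf s v"
  using q_add[of u "t *\<^sub>R v"] q_scale[of t v] by (simp add: s_simps)

lemma qpos_sub_pi:
  assumes "q_positive s C" "P \<subseteq> C" shows "C \<subseteq> pi_set s P"
  using assms unfolding q_positive_def pi_set_def by blast

lemma zorn_ext:
  assumes "q_positive s C" shows "\<exists>M. max_q_positive s M \<and> C \<subseteq> M"
proof -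
  let ?A = "{D. q_positive s D \<and> C \<subseteq> D}"
  have "?A \<noteq> {}" using assms by blast
  moreover have "\<Union>Ch \<in> ?A" if "Ch \<noteq> {}" "subset.chain ?A Ch" for Ch
  proof -
    have ch: "\<forall>X\<in>Ch. \<forall>Y\<in>Ch. X \<subseteq> Y \<or> Y \<subseteq> X" and sub: "Ch \<subseteq> ?A"
      using that(2) unfolding subset_chain_def by blast+
    have "C \<subseteq> \<Union>Ch" using sub that(1) by auto
    moreover have "\<Union>Ch \<noteq> {}" using sub that(1) assms unfolding q_positive_def by blast
    moreover have "qf s (b - c) \<ge> 0" if bc: "b \<in> \<Union>Ch" "c \<in> \<Union>Ch" for b c
    proof -
      obtain X Y where "X \<in> Ch" "Y \<in> Ch" "b \<in> X" "c \<in> Y" using bc by blast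
      then have "(b \<in> X \<and> c \<in> X \<and> X \<in> Ch) \<or> (b \<in> Y \<and> c \<in> Y \<and> Y \<in> Ch)" using ch by blast
      then obtain Z where "Z \<in> Ch" "b \<in> Z" "c \<in> Z" by blast
      then have "q_positive s Z" "b \<in> Z" "c \<in> Z" using sub by auto
      then show ?thesis unfolding q_positive_def by blast
    qed
    ultimately have "q_positive s (\<Union>Ch)" "C \<subseteq> \<Union>Ch" unfolding q_positive_def by blast+
    then show ?thesis by simp
  qed
  ultimately obtain M where M: "M \<in> ?A" "\<forall>X\<in>?A. M \<subseteq> X \<longrightarrow> X = M"
    using subset_Zorn_nonempty[of ?A] by blast
  have "max_q_positive s M" unfolding max_q_positive_def
  proof (intro conjI allI impI)
    show "q_positive s M" using M(1) by simp
    fix D assume D: "q_positive s D \<and> M \<subseteq> D"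
    then have "D \<in> ?A" using M(1) by auto
    then show "D = M" using M(2) D by blast
  qed
  then show ?thesis using M by blast
qed

lemma insert_qpos:
  assumes "q_positive s P" "b \<in> pi_set s P" shows "q_positive s (insert b P)"
proof -
  have "\<forall>a\<in>P. qf s (a - b) \<ge> 0" using assms(2) q_swap[of _ b] unfolding pi_set_def by auto
  then show ?thesis using assms q_zero unfolding q_positive_def pi_set_def by auto
qed

lemma premax_iff:
  assumes "q_positive s P"
  shows "premax_q_positive s P \<longleftrightarrow> q_positive s (pi_set s P)"
proof
  assume pm: "premax_q_positive s P"
  show "q_positive s (pi_set s P)"
  proof (rule ccontr)
    assume "\<not> ?thesis"
    moreover have "P \<subseteq> pi_set s P" using qpos_sub_pi[OF assms] by blast
    ultimately have "\<not> (\<forall>b\<in>pi_set s P. \<forall>c\<in>pi_set s P. qf s (b - c) \<ge> 0)"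
      using assms unfolding q_positive_def by blast
    then obtain b c where bc: "b \<in> pi_set s P" "c \<in> pi_set s P" "qf s (b - c) < 0"
      by force
    obtain M1 where M1: "max_q_positive s M1" "insert b P \<subseteq> M1"
      using zorn_ext[OF insert_qpos[OF assms bc(1)]] by blast
    obtain M2 where M2: "max_q_positive s M2" "insert c P \<subseteq> M2"
      using zorn_ext[OF insert_qpos[OF assms bc(2)]] by blast
    have "M1 = M2" using pm M1 M2 unfolding premax_q_positive_def by blast
    then have "b \<in> M1" "c \<in> M1" "q_positive s M1" using M1 M2 unfolding max_q_positive_def by auto
    then show False using bc(3) unfolding q_positive_def by force
  qed
next
  assume qp: "q_positive s (pi_set s P)"
  have sub: "P \<subseteq> pi_set s P" using qpos_sub_pi[OF assms] by blast
  have mx: "max_q_positive s (pi_set s P)" unfolding max_q_positive_def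
  proof (intro conjI allI impI qp)
    fix C assume "q_positive s C \<and> pi_set s P \<subseteq> C"
    then show "C = pi_set s P" using qpos_sub_pi[of C P] sub by blast
  qed
  have "M = pi_set s P" if "max_q_positive s M" "P \<subseteq> M" for M
  proof -
    have "q_positive s M" "\<forall>C. q_positive s C \<and> M \<subseteq> C \<longrightarrow> C = M"
      using that(1) unfolding max_q_positive_def by auto
    moreover have "M \<subseteq> pi_set s P" using qpos_sub_pi[of M P] that(2) calculation(1) by blast
    ultimately show ?thesis using qp by blast
  qed
  then show "premax_q_positive s P" unfolding premax_q_positive_def
    using assms mx sub by blast
qed

lemma P_sub_pi: "q_positive s P \<Longrightarrow> P \<subseteq> pi_set s P"
  using qpos_sub_pi by blast

lemma phi_qpos:
  assumes qp: "q_positive s P" and ph: "\<forall>b. ereal (qf s b) \<le> Phi s P b"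
  shows "q_positive s (pi_set s P)"
proof -
  have ne: "pi_set s P \<noteq> {}" using P_sub_pi[OF qp] qp unfolding q_positive_def by blast
  have "qf s (b - c) \<ge> 0" if b: "b \<in> pi_set s P" and c: "c \<in> pi_set s P" for b c
  proof (rule ccontr)
    assume neg: "\<not> ?thesis"
    define m where "m = b + (1/2) *\<^sub>R (c - b)"
    define \<eta> where "\<eta> = - qf s (b - c) / 4"
    have eta: "\<eta> > 0" using neg unfolding \<eta>_def by simp
    have le: "ereal (s m a - qf s a) \<le> ereal (qf s m - \<eta>)" if a: "a \<in> P" for a
    proof -
      have e1: "qf s (m - a) = qf s (b - a) + (1/2) * s (b - a) (c - b) + (1/2)^2 * qf s (c - b)"
        using q_line[of "b - a" "1/2" "c - b"] unfolding m_def by (simp add: algebra_simps)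
      have e2: "qf s (c - a) = qf s (b - a) + s (b - a) (c - b) + qf s (c - b)"
        using q_add[of "b - a" "c - b"] by (simp add: algebra_simps)
      have e3: "qf s (c - b) = qf s (b - c)" using q_swap by blast
      have "qf s (b - a) \<ge> 0" "qf s (c - a) \<ge> 0" using a b c unfolding pi_set_def by auto
      then have "qf s (m - a) \<ge> \<eta>" using e1 e2 e3 unfolding \<eta>_def by (simp add: power2_eq_square)
      moreover have "qf s (m - a) = qf s m - s m a + qf s a" by (rule q_diff)
      ultimately show ?thesis by simp
    qed
    have "Phi s P m \<le> ereal (qf s m - \<eta>)" unfolding Phi_def by (rule SUP_least) (rule le)
    also have "\<dots> < ereal (qf s m)" using eta by simp
    finally show False using ph by (meson leD)
  qed
  then show ?thesis using ne unfolding q_positive_def by blast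
qed

lemma neg_quadratic:
  fixes Q b f :: real
  assumes "Q < 0"
  shows "\<exists>t. Q * t^2 + b * t + f < 0"
proof -
  define t where "t = (\<bar>b\<bar> + \<bar>f\<bar> + 1) / (- Q) + 1"
  have "(\<bar>b\<bar> + \<bar>f\<bar> + 1) / (- Q) \<ge> 0" using assms by (intro divide_nonneg_pos) auto
  then have t1: "t \<ge> 1" unfolding t_def by linarith
  have "(- Q) * t \<ge> (- Q) * ((\<bar>b\<bar> + \<bar>f\<bar> + 1) / (- Q))"
    using assms unfolding t_def by (intro mult_left_mono) auto
  then have h: "(- Q) * t \<ge> \<bar>b\<bar> + \<bar>f\<bar> + 1" using assms by simp
  have "(- Q) * t * t \<ge> (\<bar>b\<bar> + \<bar>f\<bar> + 1) * t"
    using h t1 by (intro mult_right_mono) auto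
  then have "Q * t^2 \<le> - (\<bar>b\<bar> + \<bar>f\<bar> + 1) * t" by (simp add: power2_eq_square algebra_simps)
  moreover have "b * t \<le> \<bar>b\<bar> * t" using t1 by (intro mult_right_mono) auto
  moreover have "(\<bar>f\<bar> + 1) * 1 \<le> (\<bar>f\<bar> + 1) * t" using t1 by (intro mult_left_mono) auto
  ultimately have "Q * t^2 + b * t + f \<le> -1" by (simp add: algebra_simps)
  then show ?thesis by (intro exI[of _ t]) simp
qed

lemma affine_qpos:
  assumes qp: "q_positive s P" and af: "affine (pi_set s P)"
  shows "q_positive s (pi_set s P)"
proof -
  have ne: "pi_set s P \<noteq> {}" using P_sub_pi[OF qp] qp unfolding q_positive_def by blast
  obtain a where a: "a \<in> P" using qp unfolding q_positive_def by blast
  have "qf s (b - c) \<ge> 0" if b: "b \<in> pi_set s P" and c: "c \<in> pi_set s P" for b c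
  proof (rule ccontr)
    assume neg: "\<not> ?thesis"
    have Q: "qf s (c - b) < 0" using neg q_swap[of c b] by simp
    obtain t where t: "qf s (c - b) * t^2 + s (b - a) (c - b) * t + qf s (b - a) < 0"
      using neg_quadratic[OF Q] by blast
    have "(1 - t) *\<^sub>R b + t *\<^sub>R c \<in> pi_set s P" using af b c unfolding affine_def by simp
    then have "qf s ((1 - t) *\<^sub>R b + t *\<^sub>R c - a) \<ge> 0" using a unfolding pi_set_def by blast
    moreover have "(1 - t) *\<^sub>R b + t *\<^sub>R c - a = (b - a) + t *\<^sub>R (c - b)"
      by (simp add: algebra_simps)
    ultimately have "qf s ((b - a) + t *\<^sub>R (c - b)) \<ge> 0" by simp
    then show False using t q_line[of "b - a" t "c - b"] by (simp add: algebra_simps)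
  qed
  then show ?thesis using ne unfolding q_positive_def by blast
qed

lemma maxdiff: "max r 0 *\<^sub>R w - max (-r) 0 *\<^sub>R w = r *\<^sub>R (w::'b::real_vector)"
  by (cases "r \<ge> 0") (auto simp: max_def)

context
  fixes P :: "'a set" and b0 :: 'a and \<delta> :: real
  assumes qp: "q_positive s P" and qpi: "q_positive s (pi_set s P)"
    and dpos: "\<delta> > 0" and marg: "\<forall>a\<in>P. qf s (b0 - a) \<ge> \<delta>"
begin

definition good :: "'a \<Rightarrow> bool" where
  "good v \<longleftrightarrow> (\<exists>C \<epsilon>. \<epsilon> > 0 \<and> (\<forall>a\<in>P. \<forall>t. 0 \<le> t \<and> t \<le> \<epsilon> \<longrightarrow> \<delta> - C * t \<le> qf s (b0 + t *\<^sub>R v - a)))"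

lemma good_M:
  assumes x: "x \<in> pi_set s P" shows "good (x - b0)"
  unfolding good_def
proof (intro exI conjI ballI allI impI)
  show "(1::real) > 0" by simp
  fix a t assume a: "a \<in> P" and t: "0 \<le> t \<and> t \<le> (1::real)"
  define u where "u = b0 - a"
  define v where "v = x - b0"
  have qu: "qf s u \<ge> \<delta>" using marg a unfolding u_def by blast
  have quv: "qf s (u + v) \<ge> 0" using x a unfolding pi_set_def u_def v_def by auto
  have e1: "qf s (u + v) = qf s u + s u v + qf s v" by (rule q_add)
  have e2: "qf s (b0 + t *\<^sub>R (x - b0) - a) = qf s u + t * s u v + t^2 * qf s v"
    using q_line[of u t v] unfolding u_def v_def by (simp add: algebra_simps)
  have h1: "(1 - t) * qf s u \<ge> (1 - t) * \<delta>" using qu t by (intro mult_left_mono) auto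
  have h2: "t * qf s (u + v) \<ge> 0" using quv t by simp
  have h3: "t * (1 - t) * qf s v \<le> t * \<bar>qf s v\<bar>"
  proof -
    have "t * (1 - t) * qf s v \<le> t * (1 - t) * \<bar>qf s v\<bar>" using t by (intro mult_left_mono) auto
    also have "\<dots> \<le> t * \<bar>qf s v\<bar>" using t by (simp add: mult_left_le algebra_simps mult_right_mono)
    finally show ?thesis .
  qed
  have "qf s u + t * s u v + t^2 * qf s v = (1 - t) * qf s u + t * qf s (u + v) - t * (1 - t) * qf s v"
    using e1 by (simp add: algebra_simps power2_eq_square)
  then show "\<delta> - (\<delta> + \<bar>qf s (x - b0)\<bar>) * t \<le> qf s (b0 + t *\<^sub>R (x - b0) - a)"
    using e2 h1 h2 h3 unfolding v_def by (simp add: algebra_simps)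
qed

lemma good_add:
  assumes g1: "good v1" and g2: "good v2" shows "good (v1 + v2)"
proof -
  obtain C1 e1 where c1: "e1 > 0" "\<forall>a\<in>P. \<forall>t. 0 \<le> t \<and> t \<le> e1 \<longrightarrow> \<delta> - C1 * t \<le> qf s (b0 + t *\<^sub>R v1 - a)"
    using g1 unfolding good_def by blast
  obtain C2 e2 where c2: "e2 > 0" "\<forall>a\<in>P. \<forall>t. 0 \<le> t \<and> t \<le> e2 \<longrightarrow> \<delta> - C2 * t \<le> qf s (b0 + t *\<^sub>R v2 - a)"
    using g2 unfolding good_def by blast
  show ?thesis unfolding good_def
  proof (intro exI conjI ballI allI impI)
    show "min (min e1 e2) 1 / 2 > 0" using c1 c2 by simp
    fix a t assume a: "a \<in> P" and t: "0 \<le> t \<and> t \<le> min (min e1 e2) 1 / 2"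
    define u where "u = b0 - a"
    have t1: "0 \<le> 2*t \<and> 2*t \<le> e1" "0 \<le> 2*t \<and> 2*t \<le> e2" using t by auto
    have "\<delta> - C1 * (2*t) \<le> qf s (b0 + (2*t) *\<^sub>R v1 - a)" using c1(2) a t1(1) by blast
    moreover have "b0 + (2*t) *\<^sub>R v1 - a = u + (2*t) *\<^sub>R v1" unfolding u_def by simp
    ultimately have A1: "\<delta> - C1 * (2*t) \<le> qf s (u + (2*t) *\<^sub>R v1)" by simp
    have "\<delta> - C2 * (2*t) \<le> qf s (b0 + (2*t) *\<^sub>R v2 - a)" using c2(2) a t1(2) by blast
    moreover have "b0 + (2*t) *\<^sub>R v2 - a = u + (2*t) *\<^sub>R v2" unfolding u_def by simp
    ultimately have A2: "\<delta> - C2 * (2*t) \<le> qf s (u + (2*t) *\<^sub>R v2)" by simp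
    have id: "qf s (u + t *\<^sub>R (v1 + v2)) = qf s (u + (2*t) *\<^sub>R v1) / 2 + qf s (u + (2*t) *\<^sub>R v2) / 2 - t^2 * qf s (v1 - v2)"
    proof -
      have d: "qf s (v1 - v2) = qf s v1 + qf s v2 - s v1 v2" using q_diff[of v1 v2] by simp
      show ?thesis
      using q_line[of u t "v1 + v2"] q_line[of u "2*t" v1] q_line[of u "2*t" v2] q_add[of v1 v2]
      by (simp add: d s_simps algebra_simps power2_eq_square) (simp add: field_simps)
    qed
    have tt: "t^2 * \<bar>qf s (v1 - v2)\<bar> \<le> t * \<bar>qf s (v1 - v2)\<bar>"
    proof -
      have "t * t \<le> t * 1" using t by (intro mult_left_mono) auto
      then show ?thesis by (intro mult_right_mono) (auto simp: power2_eq_square)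
    qed
    have "t^2 * qf s (v1 - v2) \<le> t^2 * \<bar>qf s (v1 - v2)\<bar>" by (intro mult_left_mono) auto
    then show "\<delta> - (C1 + C2 + \<bar>qf s (v1 - v2)\<bar>) * t \<le> qf s (b0 + t *\<^sub>R (v1 + v2) - a)"
      using id A1 A2 tt unfolding u_def by (simp add: algebra_simps)
  qed
qed

lemma good_scale:
  assumes g: "good v" and c: "c \<ge> 0" shows "good (c *\<^sub>R v)"
proof (cases "c = 0")
  case True
  show ?thesis unfolding good_def True
    by (rule exI[of _ 0], rule exI[of _ 1]) (use marg in auto)
next
  case False
  then have cp: "c > 0" using c by simp
  obtain C e where ce: "e > 0" "\<forall>a\<in>P. \<forall>t. 0 \<le> t \<and> t \<le> e \<longrightarrow> \<delta> - C * t \<le> qf s (b0 + t *\<^sub>R v - a)"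
    using g unfolding good_def by blast
  show ?thesis unfolding good_def
  proof (intro exI conjI ballI allI impI)
    show "e / c > 0" using ce cp by simp
    fix a t assume a: "a \<in> P" and t: "0 \<le> t \<and> t \<le> e / c"
    have "t * c \<le> e" using t cp by (simp add: field_simps)
    then have "\<delta> - C * (t * c) \<le> qf s (b0 + (t * c) *\<^sub>R v - a)" using ce(2) a t cp by simp
    then show "\<delta> - (C * c) * t \<le> qf s (b0 + t *\<^sub>R (c *\<^sub>R v) - a)" by (simp add: algebra_simps)
  qed
qed

lemma good_pos:
  assumes g1: "good v1" and g2: "good v2" shows "qf s (v1 - v2) \<ge> 0"
proof -
  obtain C1 e1 where c1: "e1 > 0" "\<forall>a\<in>P. \<forall>t. 0 \<le> t \<and> t \<le> e1 \<longrightarrow> \<delta> - C1 * t \<le> qf s (b0 + t *\<^sub>R v1 - a)"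
    using g1 unfolding good_def by blast
  obtain C2 e2 where c2: "e2 > 0" "\<forall>a\<in>P. \<forall>t. 0 \<le> t \<and> t \<le> e2 \<longrightarrow> \<delta> - C2 * t \<le> qf s (b0 + t *\<^sub>R v2 - a)"
    using g2 unfolding good_def by blast
  define K where "K = \<bar>C1\<bar> + \<bar>C2\<bar> + 1"
  have Kp: "K > 0" unfolding K_def by simp
  define t where "t = min (min e1 e2) (\<delta> / K)"
  have tp: "t > 0" unfolding t_def using c1 c2 dpos Kp by simp
  have "K * t \<le> K * (\<delta> / K)" unfolding t_def using Kp by (intro mult_left_mono) auto
  then have Kt: "K * t \<le> \<delta>" using Kp by simp
  have "C1 * t \<le> K * t" "C2 * t \<le> K * t" unfolding K_def using tp
    by (auto intro!: mult_right_mono)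
  then have C1t: "C1 * t \<le> \<delta>" and C2t: "C2 * t \<le> \<delta>" using Kt by auto
  have te: "0 \<le> t \<and> t \<le> e1" "0 \<le> t \<and> t \<le> e2" using tp unfolding t_def by auto
  have "qf s (b0 + t *\<^sub>R v1 - a) \<ge> 0" if "a \<in> P" for a
    using c1(2) that te(1) C1t by force
  then have "b0 + t *\<^sub>R v1 \<in> pi_set s P" unfolding pi_set_def by blast
  moreover have "qf s (b0 + t *\<^sub>R v2 - a) \<ge> 0" if "a \<in> P" for a
    using c2(2) that te(2) C2t by force
  then have "b0 + t *\<^sub>R v2 \<in> pi_set s P" unfolding pi_set_def by blast
  ultimately have "qf s ((b0 + t *\<^sub>R v1) - (b0 + t *\<^sub>R v2)) \<ge> 0"
    using qpi unfolding q_positive_def by blast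
  then have "t^2 * qf s (v1 - v2) \<ge> 0" using q_scale[of t "v1 - v2"] by (simp add: algebra_simps)
  then show ?thesis using tp by (simp add: zero_le_mult_iff)
qed

lemma pi_affine: "affine (pi_set s P)"
  unfolding affine_def
proof (intro ballI allI impI)
  fix x y and l m :: real
  assume x: "x \<in> pi_set s P" and y: "y \<in> pi_set s P" and lm: "l + m = 1"
  define k1 where "k1 = max l 0 *\<^sub>R (x - b0) + max m 0 *\<^sub>R (y - b0)"
  define k2 where "k2 = max (-l) 0 *\<^sub>R (x - b0) + max (-m) 0 *\<^sub>R (y - b0)"
  have gk1: "good k1" unfolding k1_def using good_M[OF x] good_M[OF y]
    by (intro good_add good_scale) auto
  have gk2: "good k2" unfolding k2_def using good_M[OF x] good_M[OF y]
    by (intro good_add good_scale) auto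
  have kk: "k1 - k2 = l *\<^sub>R (x - b0) + m *\<^sub>R (y - b0)"
    using maxdiff[of l "x - b0"] maxdiff[of m "y - b0"] unfolding k1_def k2_def
    by (metis add_diff_add)
  have "qf s (l *\<^sub>R x + m *\<^sub>R y - a) \<ge> 0" if a: "a \<in> P" for a
  proof -
    have "a \<in> pi_set s P" using P_sub_pi[OF qp] a by blast
    then have "good (a - b0)" by (rule good_M)
    then have "good (k2 + (a - b0))" using gk2 by (rule good_add[rotated])
    then have "qf s (k1 - (k2 + (a - b0))) \<ge> 0" using gk1 good_pos by blast
    moreover have "k1 - (k2 + (a - b0)) = l *\<^sub>R x + m *\<^sub>R y - a"
    proof -
      have "k1 - (k2 + (a - b0)) = l *\<^sub>R (x - b0) + m *\<^sub>R (y - b0) - (a - b0)"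
        using kk by (simp add: algebra_simps)
      also have "\<dots> = l *\<^sub>R x + m *\<^sub>R y - (l + m) *\<^sub>R b0 + b0 - a"
        by (simp add: algebra_simps)
      finally show ?thesis using lm by simp
    qed
    ultimately show ?thesis by simp
  qed
  then show "l *\<^sub>R x + m *\<^sub>R y \<in> pi_set s P" unfolding pi_set_def by blast
qed

end

end


theorem mainTheorem3:
  fixes s :: "'a::real_vector \<Rightarrow> 'a \<Rightarrow> real" and P :: "'a set"
  assumes "ssd_space s"
    and "q_positive s P"
  shows "premax_q_positive s P \<longleftrightarrow>
           ((\<forall>b. ereal (qf s b) \<le> Phi s P b) \<or> affine (pi_set s P))"
proof -
  note ssd = assms(1) and qp = assms(2)
  have pm: "premax_q_positive s P \<longleftrightarrow> q_positive s (pi_set s P)"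
    by (rule premax_iff[OF ssd qp])
  show ?thesis
  proof
    assume "premax_q_positive s P"
    then have qpi: "q_positive s (pi_set s P)" using pm by simp
    show "(\<forall>b. ereal (qf s b) \<le> Phi s P b) \<or> affine (pi_set s P)"
    proof (cases "\<forall>b. ereal (qf s b) \<le> Phi s P b")
      case True then show ?thesis by simp
    next
      case False
      then obtain b0 where lt: "Phi s P b0 < ereal (qf s b0)" by (meson not_le)
      obtain a0 where a0: "a0 \<in> P" using qp unfolding q_positive_def by blast
      have ge: "ereal (s b0 a0 - qf s a0) \<le> Phi s P b0" unfolding Phi_def
        by (rule SUP_upper[OF a0])
      obtain c where c: "Phi s P b0 = ereal c" using lt ge by (cases "Phi s P b0") auto
      define \<delta> where "\<delta> = qf s b0 - c"
      have dpos: "\<delta> > 0" using lt c unfolding \<delta>_def by simp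
      have marg: "\<forall>a\<in>P. qf s (b0 - a) \<ge> \<delta>"
      proof
        fix a assume a: "a \<in> P"
        have "ereal (s b0 a - qf s a) \<le> Phi s P b0" unfolding Phi_def
          by (rule SUP_upper[OF a])
        then have "s b0 a - qf s a \<le> c" using c by simp
        moreover have "qf s (b0 - a) = qf s b0 - s b0 a + qf s a" by (rule q_diff[OF ssd])
        ultimately show "qf s (b0 - a) \<ge> \<delta>" unfolding \<delta>_def by simp
      qed
      have "affine (pi_set s P)" by (rule pi_affine[OF ssd qp qpi dpos marg])
      then show ?thesis by simp
    qed
  next
    assume "(\<forall>b. ereal (qf s b) \<le> Phi s P b) \<or> affine (pi_set s P)"
    then have "q_positive s (pi_set s P)"
      using phi_qpos[OF ssd qp] affine_qpos[OF ssd qp] by blast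
    then show "premax_q_positive s P" using pm by simp
  qed
qed

end
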